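(* In Algorithm SC (with $|b(v)|\le\deg(v)$ for all $v$ and $\alpha\in(0,1/4]$), for every round $i$ and every $v\in V$: if $\tilde\phi^i_v>0$ then $r^{\le i-1}_v\ge\frac{\ln n}{\alpha}$, and if $\tilde\phi^i_v<0$ then $r^{\le i-1}_v\le-\frac{\ln n}{\alpha}$.
   Context: Let $G=(V,E)$ be a unit-capacity undirected graph, $n=|V|\ge3$, every vertex of degree $\deg(v)\ge1$, each edge with a fixed arbitrary orientation; $B\in\mathbb R^{V\times E}$ is the incidence matrix (column $(u,v)$ has $+1$ in row $u$, $-1$ in row $v$, $0$ elsewhere). Algorithm SC takes $b\in\mathbb R^V$ with $|b(v)|\le\deg(v)$ for all $v$, $\alpha\in(0,1/4]$ and an integer $T\ge1$. Set $w^1_{v,+}=w^1_{v,-}=1$ for all $v$. For $i=1,\dots,T$: (1) for $\circ\in\{+,-\}$, $\tilde w^i_{v,\circ}=w^i_{v,\circ}$ if $w^i_{v,\circ}\ge n$ and $\tilde w^i_{v,\circ}=0$ otherwise; (2) $\tilde\phi^i_v=(\tilde w^i_{v,+}-\tilde w^i_{v,-})/\deg(v)$; (3) for each edge $(u,v)$, $f^i(u,v)=+1$ if $\tilde\phi^i_u>\tilde\phi^i_v$, $-1$ if $\tilde\phi^i_u<\tilde\phi^i_v$, $0$ otherwise; (4) if $\langle\tilde\phi^i,b\rangle>\langle\tilde\phi^i,Bf^i\rangle$, terminate; (5) $r^i_v=(b(v)-(Bf^i)_v)/\deg(v)$; (6) $w^{i+1}_{v,+}=w^i_{v,+}(1+\alpha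 r^i_v)$ and $w^{i+1}_{v,-}=w^i_{v,-}(1-\alpha r^i_v)$. Write $r^{\le i}_v=\sum_{i'=1}^{i}r^{i'}_v$, with $r^{\le 0}_v=0$. *)

theory Defs
  imports Complex_Main
begin

text \<open>Graph: finite vertex set V, edge set E of oriented pairs (u,v) (column (u,v) of B has
 +1 in row u and -1 in row v). Undirected simple graph with a fixed orientation.\<close>

definition sc_deg :: "('v \<times> 'v) set \<Rightarrow> 'v \<Rightarrow> real" where
  "sc_deg E v = real (card {e \<in> E. fst e = v \<or> snd e = v})"

definition sc_Bf :: "('v \<times> 'v) set \<Rightarrow> ('v \<times> 'v \<Rightarrow> real) \<Rightarrow> 'v \<Rightarrow> real" where
  "sc_Bf E f v = (\<Sum>e\<in>{e \<in> E. fst e = v}. f e) - (\<Sum>e\<in>{e \<in> E. snd e = v}. f e)"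

definition sc_trunc :: "'v set \<Rightarrow> real \<Rightarrow> real" where
  "sc_trunc V w = (if w \<ge> real (card V) then w else 0)"

definition sc_phi_of :: "'v set \<Rightarrow> ('v \<times> 'v) set \<Rightarrow> ('v \<Rightarrow> real) \<times> ('v \<Rightarrow> real) \<Rightarrow> 'v \<Rightarrow> real" where
  "sc_phi_of V E w v = (sc_trunc V (fst w v) - sc_trunc V (snd w v)) / sc_deg E v"

definition sc_flow_of :: "('v \<Rightarrow> real) \<Rightarrow> 'v \<times> 'v \<Rightarrow> real" where
  "sc_flow_of phi e = (if phi (fst e) > phi (snd e) then 1
                       else if phi (fst e) < phi (snd e) then -1 else 0)"

definition sc_r_of :: "'v set \<Rightarrow> ('v \<times> 'v) set \<Rightarrow> ('v \<Rightarrow> real) \<Rightarrow> ('v \<Rightarrow> real) \<times> ('v \<Rightarrow> real) \<Rightarrow> 'v \<Rightarrow> real" where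
  "sc_r_of V E b w v = (b v - sc_Bf E (sc_flow_of (sc_phi_of V E w)) v) / sc_deg E v"

text \<open>Weights: sc_W V E b alpha k is the pair (w^{k+1}_+, w^{k+1}_-) (shifted index, k = i - 1).
 Step (6) is the update.\<close>
primrec sc_W :: "'v set \<Rightarrow> ('v \<times> 'v) set \<Rightarrow> ('v \<Rightarrow> real) \<Rightarrow> real \<Rightarrow> nat \<Rightarrow> ('v \<Rightarrow> real) \<times> ('v \<Rightarrow> real)" where
  "sc_W V E b alpha 0 = ((\<lambda>v. 1), (\<lambda>v. 1))"
| "sc_W V E b alpha (Suc k) =
     (let w = sc_W V E b alpha k; r = sc_r_of V E b w in
       ((\<lambda>v. fst w v * (1 + alpha * r v)), (\<lambda>v. snd w v * (1 - alpha * r v))))"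

definition sc_phi :: "'v set \<Rightarrow> ('v \<times> 'v) set \<Rightarrow> ('v \<Rightarrow> real) \<Rightarrow> real \<Rightarrow> nat \<Rightarrow> 'v \<Rightarrow> real" where
  "sc_phi V E b alpha i = sc_phi_of V E (sc_W V E b alpha (i - 1))"

definition sc_f :: "'v set \<Rightarrow> ('v \<times> 'v) set \<Rightarrow> ('v \<Rightarrow> real) \<Rightarrow> real \<Rightarrow> nat \<Rightarrow> 'v \<times> 'v \<Rightarrow> real" where
  "sc_f V E b alpha i = sc_flow_of (sc_phi V E b alpha i)"

definition sc_r :: "'v set \<Rightarrow> ('v \<times> 'v) set \<Rightarrow> ('v \<Rightarrow> real) \<Rightarrow> real \<Rightarrow> nat \<Rightarrow> 'v \<Rightarrow> real" where
  "sc_r V E b alpha i = sc_r_of V E b (sc_W V E b alpha (i - 1))"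

definition sc_rcum :: "'v set \<Rightarrow> ('v \<times> 'v) set \<Rightarrow> ('v \<Rightarrow> real) \<Rightarrow> real \<Rightarrow> nat \<Rightarrow> 'v \<Rightarrow> real" where
  "sc_rcum V E b alpha i v = (\<Sum>i'\<in>{1..i}. sc_r V E b alpha i' v)"

definition sc_terminates :: "'v set \<Rightarrow> ('v \<times> 'v) set \<Rightarrow> ('v \<Rightarrow> real) \<Rightarrow> real \<Rightarrow> nat \<Rightarrow> bool" where
  "sc_terminates V E b alpha i \<longleftrightarrow>
     (\<Sum>v\<in>V. sc_phi V E b alpha i v * b v) >
     (\<Sum>v\<in>V. sc_phi V E b alpha i v * sc_Bf E (sc_f V E b alpha i) v)"

end

theory Submission
  imports Defs
begin

lemma Bf_bound:
  assumes finE: "finite E" and nl: "\<And>u w. (u, w) \<in> E \<Longrightarrow> u \<noteq> w"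
    and fb: "\<And>e. \<bar>f e\<bar> \<le> 1"
  shows "\<bar>sc_Bf E f v\<bar> \<le> sc_deg E v"
proof -
  let ?O = "{e \<in> E. fst e = v}" and ?I = "{e \<in> E. snd e = v}"
  have fO: "finite ?O" and fI: "finite ?I" using finE by auto
  have h1: "\<bar>\<Sum>e\<in>?O. f e\<bar> \<le> real (card ?O)"
  proof -
    have "\<bar>\<Sum>e\<in>?O. f e\<bar> \<le> (\<Sum>e\<in>?O. \<bar>f e\<bar>)" by (rule sum_abs)
    also have "\<dots> \<le> (\<Sum>e\<in>?O. 1)" by (rule sum_mono) (use fb in auto)
    finally show ?thesis by simp
  qed
  have h2: "\<bar>\<Sum>e\<in>?I. f e\<bar> \<le> real (card ?I)"
  proof -
    have "\<bar>\<Sum>e\<in>?I. f e\<bar> \<le> (\<Sum>e\<in>?I. \<bar>f e\<bar>)" by (rule sum_abs)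
    also have "\<dots> \<le> (\<Sum>e\<in>?I. 1)" by (rule sum_mono) (use fb in auto)
    finally show ?thesis by simp
  qed
  have disj: "?O \<inter> ?I = {}" using nl by fastforce
  have un: "{e \<in> E. fst e = v \<or> snd e = v} = ?O \<union> ?I" by auto
  have "card {e \<in> E. fst e = v \<or> snd e = v} = card ?O + card ?I"
    unfolding un using card_Un_disjoint[OF fO fI disj] .
  hence "sc_deg E v = real (card ?O) + real (card ?I)" unfolding sc_deg_def by simp
  thus ?thesis unfolding sc_Bf_def using h1 h2 by linarith
qed

lemma r_bound:
  assumes finE: "finite E" and nl: "\<And>u w. (u, w) \<in> E \<Longrightarrow> u \<noteq> w"
    and dp: "sc_deg E v \<ge> 1" and bb: "\<bar>b v\<bar> \<le> sc_deg E v"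
  shows "\<bar>sc_r_of V E b w v\<bar> \<le> 2"
proof -
  have fb: "\<And>e. \<bar>sc_flow_of p e\<bar> \<le> 1" for p unfolding sc_flow_of_def by auto
  have B: "\<bar>sc_Bf E (sc_flow_of (sc_phi_of V E w)) v\<bar> \<le> sc_deg E v"
    by (rule Bf_bound[OF finE nl fb])
  have "\<bar>b v - sc_Bf E (sc_flow_of (sc_phi_of V E w)) v\<bar> \<le> 2 * sc_deg E v"
    using B bb by linarith
  thus ?thesis unfolding sc_r_of_def using dp
    by (simp add: abs_divide divide_le_eq)
qed

lemma W_formula:
  "fst (sc_W V E b alpha k) v = (\<Prod>j<k. 1 + alpha * sc_r_of V E b (sc_W V E b alpha j) v)
   \<and> snd (sc_W V E b alpha k) v = (\<Prod>j<k. 1 - alpha * sc_r_of V E b (sc_W V E b alpha j) v)"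
  by (induction k) (simp_all add: Let_def mult.commute)

lemma rcum_formula:
  "sc_rcum V E b alpha k v = (\<Sum>j<k. sc_r_of V E b (sc_W V E b alpha j) v)"
  unfolding sc_rcum_def sc_r_def
  by (induction k) auto

lemma ln_prod_le:
  fixes x :: "nat \<Rightarrow> real"
  assumes "\<And>j. j < k \<Longrightarrow> \<bar>x j\<bar> \<le> 1/2"
  shows "ln (\<Prod>j<k. 1 + x j) \<le> (\<Sum>j<k. x j)"
proof -
  have pos: "\<And>j. j < k \<Longrightarrow> 0 < 1 + x j" using assms by fastforce
  have "ln (\<Prod>j<k. 1 + x j) = (\<Sum>j<k. ln (1 + x j))"
    by (rule ln_prod) (use pos in force)+
  also have "\<dots> \<le> (\<Sum>j<k. x j)"
    by (rule sum_mono) (use pos ln_le_minus_one in force)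
  finally show ?thesis .
qed

theorem lemma2p7:
  fixes V :: "'v set" and E :: "('v \<times> 'v) set" and b :: "'v \<Rightarrow> real"
    and alpha :: real and T i :: nat and v :: 'v
  assumes finV: "finite V"
    and n3: "card V \<ge> 3"
    and E_sub: "E \<subseteq> V \<times> V"
    and no_loops: "\<And>u w. (u, w) \<in> E \<Longrightarrow> u \<noteq> w"
    and one_orient: "\<And>u w. (u, w) \<in> E \<Longrightarrow> (w, u) \<notin> E"
    and deg_pos: "\<And>x. x \<in> V \<Longrightarrow> sc_deg E x \<ge> 1"
    and b_bound: "\<And>x. x \<in> V \<Longrightarrow> \<bar>b x\<bar> \<le> sc_deg E x"
    and alpha_pos: "0 < alpha" and alpha_le: "alpha \<le> 1/4"
    and T_pos: "T \<ge> 1"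
    and i_range: "1 \<le> i" "i \<le> T"
    and not_term: "\<And>i'. 1 \<le> i' \<Longrightarrow> i' < i \<Longrightarrow> \<not> sc_terminates V E b alpha i'"
    and v_in: "v \<in> V"
  shows "(sc_phi V E b alpha i v > 0 \<longrightarrow> sc_rcum V E b alpha (i - 1) v \<ge> ln (real (card V)) / alpha)
       \<and> (sc_phi V E b alpha i v < 0 \<longrightarrow> sc_rcum V E b alpha (i - 1) v \<le> - (ln (real (card V)) / alpha))"
proof -
  define k where "k = i - 1"
  define r where "r j = sc_r_of V E b (sc_W V E b alpha j) v" for j
  define P where "P = fst (sc_W V E b alpha k) v"
  define M where "M = snd (sc_W V E b alpha k) v"
  have finE: "finite E" using finite_subset[OF E_sub] finV by auto
  have rb: "\<bar>r j\<bar> \<le> 2" for j unfolding r_def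
    using r_bound[of E v b V] finE no_loops deg_pos[OF v_in] b_bound[OF v_in] by blast
  have ab: "\<bar>alpha * r j\<bar> \<le> 1/2" for j
  proof -
    have "\<bar>alpha * r j\<bar> = alpha * \<bar>r j\<bar>" using alpha_pos by (simp add: abs_mult)
    also have "\<dots> \<le> (1/4) * 2" using rb[of j] alpha_le alpha_pos
      by (intro mult_mono) auto
    finally show ?thesis by simp
  qed
  have ab2: "\<bar>- (alpha * r j)\<bar> \<le> 1/2" for j using ab[of j] by simp
  have Pf: "P = (\<Prod>j<k. 1 + alpha * r j)" and Mf: "M = (\<Prod>j<k. 1 + - (alpha * r j))"
    using W_formula[of V E b alpha k v] unfolding P_def M_def r_def by simp_all
  have lnP: "ln P \<le> alpha * (\<Sum>j<k. r j)"
    using ln_prod_le[of k "\<lambda>j. alpha * r j"] ab unfolding Pf by (simp add: sum_distrib_left)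
  have lnM: "ln M \<le> - (alpha * (\<Sum>j<k. r j))"
    using ln_prod_le[of k "\<lambda>j. - (alpha * r j)"] ab2 unfolding Mf
    by (simp add: sum_distrib_left sum_negf)
  have rc: "sc_rcum V E b alpha (i - 1) v = (\<Sum>j<k. r j)"
    unfolding rcum_formula k_def r_def ..
  have phi: "sc_phi V E b alpha i v = (sc_trunc V P - sc_trunc V M) / sc_deg E v"
    unfolding sc_phi_def sc_phi_of_def P_def M_def k_def ..
  have dpos: "sc_deg E v > 0" using deg_pos[OF v_in] by simp
  have npos: "real (card V) > 0" using n3 by simp
  have tP: "sc_trunc V P \<ge> 0" "sc_trunc V P > 0 \<Longrightarrow> P \<ge> real (card V)"
    using npos unfolding sc_trunc_def by (auto split: if_splits)
  have tM: "sc_trunc V M \<ge> 0" "sc_trunc V M > 0 \<Longrightarrow> M \<ge> real (card V)"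
    using npos unfolding sc_trunc_def by (auto split: if_splits)
  show ?thesis
  proof (intro conjI impI)
    assume "sc_phi V E b alpha i v > 0"
    hence "sc_trunc V P - sc_trunc V M > 0" unfolding phi using dpos
      by (simp add: zero_less_divide_iff)
    hence "P \<ge> real (card V)" using tP tM by linarith
    hence "ln (real (card V)) \<le> ln P" using npos by simp
    hence "ln (real (card V)) \<le> alpha * sc_rcum V E b alpha (i - 1) v" using lnP rc by simp
    thus "sc_rcum V E b alpha (i - 1) v \<ge> ln (real (card V)) / alpha"
      using alpha_pos by (simp add: divide_le_eq mult.commute)
  next
    assume "sc_phi V E b alpha i v < 0"
    hence "sc_trunc V P - sc_trunc V M < 0" unfolding phi using dpos
      by (simp add: divide_less_0_iff)
    hence "M \<ge> real (card V)" using tP tM by linarith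
    hence "ln (real (card V)) \<le> ln M" using npos by simp
    hence "ln (real (card V)) \<le> - (alpha * sc_rcum V E b alpha (i - 1) v)" using lnM rc by simp
    hence "ln (real (card V)) / alpha \<le> - sc_rcum V E b alpha (i - 1) v"
      using alpha_pos by (simp add: divide_le_eq mult.commute)
    thus "sc_rcum V E b alpha (i - 1) v \<le> - (ln (real (card V)) / alpha)" by linarith
  qed
qed

end
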